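(* Let $n\ge 1$ be odd and let $\mathbb{P}^n=\mathrm{Proj}\,\mathbb{F}_q[x_0,\dots,x_n]$. Set $$g=\sum_{\substack{0\le i\le n-1\\ i \text{ even}}}\left(x_i^qx_{i+1}-x_ix_{i+1}^q\right).$$ Then $V(g)\subset\mathbb{P}^n$ is a smooth hypersurface of degree $q+1$ with $V(g)(\mathbb{F}_q)=\mathbb{P}^n(\mathbb{F}_q)$; moreover, if $n\ge 3$, $V(g)$ is geometrically irreducible.
   Context: $\mathbb{F}_q$ is the finite field of order $q=p^r$. For a projective $\mathbb{F}_q$-scheme $X$, $X(\mathbb{F}_q)$ denotes its set of $\mathbb{F}_q$-rational points. *)

theory Defs
  imports Main "HOL-Library.Poly_Mapping" "HOL-Computational_Algebra.Factorial_Ring"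
begin

text \<open>Multivariate polynomials in the variables x_0, x_1, ... over a commutative ring 'a,
  represented as finitely supported maps from monomials (exponent vectors) to coefficients.\<close>

type_synonym 'a mpoly = "(nat \<Rightarrow>\<^sub>0 nat) \<Rightarrow>\<^sub>0 'a"

definition mvar :: "nat \<Rightarrow> 'a::comm_ring_1 mpoly" where
  "mvar i = Poly_Mapping.single (Poly_Mapping.single i 1) 1"

definition meval :: "'a::comm_ring_1 mpoly \<Rightarrow> (nat \<Rightarrow> 'a) \<Rightarrow> 'a" where
  "meval p x = (\<Sum>m::nat \<Rightarrow>\<^sub>0 nat\<in>Poly_Mapping.keys p. Poly_Mapping.lookup p m * (\<Prod>i\<in>Poly_Mapping.keys m. x i ^ Poly_Mapping.lookup m i))"

definition mpderiv :: "nat \<Rightarrow> 'a::comm_ring_1 mpoly \<Rightarrow> 'a mpoly" where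
  "mpderiv i p = (\<Sum>m::nat \<Rightarrow>\<^sub>0 nat\<in>Poly_Mapping.keys p.
      Poly_Mapping.single (m - Poly_Mapping.single i 1) (of_nat (Poly_Mapping.lookup m i) * Poly_Mapping.lookup p m))"

definition mon_deg :: "(nat \<Rightarrow>\<^sub>0 nat) \<Rightarrow> nat" where
  "mon_deg m = (\<Sum>i\<in>Poly_Mapping.keys m. Poly_Mapping.lookup m i)"

definition homogeneous :: "nat \<Rightarrow> 'a::comm_ring_1 mpoly \<Rightarrow> bool" where
  "homogeneous d p \<longleftrightarrow> (\<forall>m\<in>Poly_Mapping.keys p. mon_deg m = d)"

definition in_vars :: "nat \<Rightarrow> 'a::comm_ring_1 mpoly \<Rightarrow> bool" where
  "in_vars n p \<longleftrightarrow> (\<forall>m\<in>Poly_Mapping.keys p. Poly_Mapping.keys m \<subseteq> {0..n})"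

text \<open>Ring homomorphism (between fields: field embedding).\<close>
definition ring_hom_fun :: "('a::comm_ring_1 \<Rightarrow> 'b::comm_ring_1) \<Rightarrow> bool" where
  "ring_hom_fun \<phi> \<longleftrightarrow> \<phi> 0 = 0 \<and> \<phi> 1 = 1 \<and> (\<forall>a b. \<phi> (a + b) = \<phi> a + \<phi> b)
     \<and> (\<forall>a b. \<phi> (a * b) = \<phi> a * \<phi> b)"

definition gpoly :: "nat \<Rightarrow> nat \<Rightarrow> 'a::comm_ring_1 mpoly" where
  "gpoly q n = (\<Sum>i\<in>{i. i < n \<and> even i}.
      mvar i ^ q * mvar (Suc i) - mvar i * mvar (Suc i) ^ q)"

definition smooth_hypersurface :: "nat \<Rightarrow> 'a::field mpoly \<Rightarrow> bool" where
  "smooth_hypersurface n p \<longleftrightarrow>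
     (\<forall>x::nat \<Rightarrow> 'a. (\<exists>i\<le>n. x i \<noteq> 0) \<longrightarrow>
        \<not> (meval p x = 0 \<and> (\<forall>i\<le>n. meval (mpderiv i p) x = 0)))"

text \<open>V(p) is irreducible (as a topological space) iff p is associated to a power of an
  irreducible polynomial (radical of (p) is prime).\<close>
definition irreducible_hypersurface :: "'a::field mpoly \<Rightarrow> bool" where
  "irreducible_hypersurface p \<longleftrightarrow>
     (\<exists>h k. irreducible h \<and> k > 0 \<and> p dvd h ^ k \<and> h ^ k dvd p)"

end

theory Submission
  imports Defs
begin


definition Am :: "nat \<Rightarrow> nat \<Rightarrow> (nat \<Rightarrow>\<^sub>0 nat)" where
  "Am q i = Poly_Mapping.single i q + Poly_Mapping.single (Suc i) 1"
definition Bm :: "nat \<Rightarrow> nat \<Rightarrow> (nat \<Rightarrow>\<^sub>0 nat)" where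
  "Bm q i = Poly_Mapping.single i 1 + Poly_Mapping.single (Suc i) q"

lemma lookup_Am: "Poly_Mapping.lookup (Am q i) k = (if k = i then q else if k = Suc i then 1 else 0)"
  by (auto simp: Am_def lookup_add lookup_single)
lemma lookup_Bm: "Poly_Mapping.lookup (Bm q i) k = (if k = i then 1 else if k = Suc i then q else 0)"
  by (auto simp: Bm_def lookup_add lookup_single)

lemma single_pow: "(Poly_Mapping.single (Poly_Mapping.single i (1::nat)) (1::'a::comm_ring_1)) ^ k
   = Poly_Mapping.single (Poly_Mapping.single i k) 1"
proof (induction k)
  case 0 then show ?case by simp
next
  case (Suc k) then show ?case
    by (simp add: mult_single single_add[symmetric] add.commute)
qed

lemma gpoly_eq: "gpoly q n = (\<Sum>i\<in>{i. i < n \<and> even i}.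
   Poly_Mapping.single (Am q i) (1::'a::comm_ring_1) - Poly_Mapping.single (Bm q i) 1)"
  unfolding gpoly_def mvar_def single_pow
  by (simp add: mult_single Am_def Bm_def)

lemma Am_inj: "q \<ge> 2 \<Longrightarrow> Am q i = Am q j \<Longrightarrow> i = j"
  by (metis lookup_Am n_not_Suc_n numeral_le_one_iff semiring_norm(69) zero_neq_numeral le_zero_eq)
lemma Bm_inj: "q \<ge> 2 \<Longrightarrow> Bm q i = Bm q j \<Longrightarrow> i = j"
  by (metis lookup_Bm Suc_inject n_not_Suc_n numeral_le_one_iff semiring_norm(69) zero_neq_numeral le_zero_eq)
lemma AB_ne: "q \<ge> 2 \<Longrightarrow> even i \<Longrightarrow> even j \<Longrightarrow> Am q i \<noteq> Bm q j"
  by (metis lookup_Am lookup_Bm even_Suc numeral_le_one_iff semiring_norm(69) zero_neq_numeral le_zero_eq)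




abbreviation "EE n \<equiv> {i::nat. i < n \<and> even i}"

lemma finite_EE: "finite (EE n)" by simp

lemma sum_when_inj: "finite E \<Longrightarrow> inj_on f E \<Longrightarrow>
   (\<Sum>i\<in>E. ((1::'a::comm_ring_1) when f i = m)) = (if m \<in> f ` E then 1 else 0)"
proof (cases "m \<in> f ` E")
  case True
  assume fin: "finite E" and inj: "inj_on f E"
  from True obtain i0 where i0: "i0 \<in> E" "m = f i0" by auto
  have "(\<Sum>i\<in>E. ((1::'a) when f i = m)) = (\<Sum>i\<in>E. (if i = i0 then 1 else 0))"
    apply (rule sum.cong, simp)
    using inj i0 by (auto simp: when_def inj_on_def)
  also have "\<dots> = 1" using i0 fin by simp
  finally show ?thesis using True by simp
next
  case False
  then show ?thesis by (auto simp: when_def intro!: sum.neutral)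
qed

lemma lookup_g: assumes "q \<ge> 2"
  shows "Poly_Mapping.lookup (gpoly q n :: 'a::comm_ring_1 mpoly) m =
    (if m \<in> Am q ` EE n then 1 else if m \<in> Bm q ` EE n then -1 else 0)"
proof -
  have ia: "inj_on (Am q) (EE n)" using Am_inj[OF assms] by (auto simp: inj_on_def)
  have ib: "inj_on (Bm q) (EE n)" using Bm_inj[OF assms] by (auto simp: inj_on_def)
  have "Poly_Mapping.lookup (gpoly q n :: 'a mpoly) m =
     (\<Sum>i\<in>EE n. ((1::'a) when Am q i = m)) - (\<Sum>i\<in>EE n. ((1::'a) when Bm q i = m))"
    by (simp add: gpoly_eq lookup_sum lookup_minus lookup_single sum_subtractf)
  also have "\<dots> = (if m \<in> Am q ` EE n then 1 else 0) - (if m \<in> Bm q ` EE n then 1 else 0)"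
    by (simp add: sum_when_inj[OF finite_EE ia] sum_when_inj[OF finite_EE ib])
  also have "\<dots> = (if m \<in> Am q ` EE n then 1 else if m \<in> Bm q ` EE n then -1 else 0)"
    using AB_ne[OF assms] AB_ne[OF assms, symmetric] by auto
  finally show ?thesis .
qed

lemma keys_g: assumes "q \<ge> 2"
  shows "Poly_Mapping.keys (gpoly q n :: 'a::comm_ring_1 mpoly) = Am q ` EE n \<union> Bm q ` EE n"
proof (rule set_eqI)
  fix m
  show "m \<in> Poly_Mapping.keys (gpoly q n :: 'a mpoly) \<longleftrightarrow> m \<in> Am q ` EE n \<union> Bm q ` EE n"
    unfolding in_keys_iff lookup_g[OF assms] by simp
qed

definition mon :: "(nat \<Rightarrow>\<^sub>0 nat) \<Rightarrow> (nat \<Rightarrow> 'a::comm_ring_1) \<Rightarrow> 'a" where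
  "mon m x = (\<Prod>i\<in>Poly_Mapping.keys m. x i ^ Poly_Mapping.lookup m i)"

lemma meval_mon: "meval p x = (\<Sum>m\<in>Poly_Mapping.keys p. Poly_Mapping.lookup p m * mon m x)"
  by (simp add: meval_def mon_def)

lemma mon_superset: "finite K \<Longrightarrow> Poly_Mapping.keys m \<subseteq> K \<Longrightarrow>
   mon m x = (\<Prod>i\<in>K. x i ^ Poly_Mapping.lookup m i)"
  unfolding mon_def by (rule prod.mono_neutral_left) (auto simp: in_keys_iff)

lemma meval_superset: "finite K \<Longrightarrow> Poly_Mapping.keys p \<subseteq> K \<Longrightarrow>
   meval p x = (\<Sum>m\<in>K. Poly_Mapping.lookup p m * mon m x)"
  unfolding meval_mon by (rule sum.mono_neutral_left) (auto simp: in_keys_iff)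

lemma meval_add: "meval (p + p') x = meval p x + meval p' x"
proof -
  let ?K = "Poly_Mapping.keys p \<union> Poly_Mapping.keys p'"
  have "meval (p + p') x = (\<Sum>m\<in>?K. Poly_Mapping.lookup (p+p') m * mon m x)"
    by (rule meval_superset) (auto dest: subsetD[OF keys_add])
  also have "\<dots> = (\<Sum>m\<in>?K. Poly_Mapping.lookup p m * mon m x) + (\<Sum>m\<in>?K. Poly_Mapping.lookup p' m * mon m x)"
    by (simp add: lookup_add distrib_right sum.distrib)
  also have "\<dots> = meval p x + meval p' x"
    by (simp add: meval_superset[symmetric])
  finally show ?thesis .
qed

lemma meval_zero: "meval 0 x = 0" by (simp add: meval_def)

lemma meval_sum: "meval (\<Sum>i\<in>S. f i) x = (\<Sum>i\<in>S. meval (f i) x)"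
  by (induction S rule: infinite_finite_induct) (auto simp: meval_zero meval_add)

lemma meval_single: "meval (Poly_Mapping.single m c) x = c * mon m x"
  by (subst meval_superset[of "{m}"]) auto

lemma meval_mpderiv: "meval (mpderiv j p) x =
  (\<Sum>m\<in>Poly_Mapping.keys p. of_nat (Poly_Mapping.lookup m j) * Poly_Mapping.lookup p m
      * mon (m - Poly_Mapping.single j 1) x)"
  by (simp add: mpderiv_def meval_sum meval_single)

lemma meval_mpderiv_superset: "finite K \<Longrightarrow> Poly_Mapping.keys p \<subseteq> K \<Longrightarrow> meval (mpderiv j p) x =
  (\<Sum>m\<in>K. of_nat (Poly_Mapping.lookup m j) * Poly_Mapping.lookup p m
      * mon (m - Poly_Mapping.single j 1) x)"
  unfolding meval_mpderiv by (rule sum.mono_neutral_left) (auto simp: in_keys_iff)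

lemma finite_card_zero: "of_nat (card (UNIV :: 'k::{finite,comm_ring_1} set)) = (0::'k)"
proof -
  have "(\<Sum>x\<in>(UNIV::'k set). x + 1) = (\<Sum>x\<in>UNIV. x)"
    by (rule sum.reindex_bij_witness[of _ "\<lambda>x. x - 1" "\<lambda>x. x + 1"]) auto
  then show ?thesis by (simp add: sum.distrib)
qed

lemma finite_field_pow: "(a::'k::{finite,field}) ^ card (UNIV :: 'k set) = a"
proof (cases "a = 0")
  case True
  have "card (UNIV::'k set) > 0" by (simp add: card_gt_0_iff)
  then have "(0::'k) ^ card (UNIV::'k set) = 0" by (rule zero_power)
  then show ?thesis using True by simp
next
  case False
  let ?S = "UNIV - {0::'k}"
  have "(\<Prod>x\<in>?S. a * x) = (\<Prod>x\<in>?S. x)"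
    by (rule prod.reindex_bij_witness[of _ "\<lambda>x. x / a" "\<lambda>x. a * x"]) (use False in auto)
  moreover have "(\<Prod>x\<in>?S. a * x) = a ^ card ?S * (\<Prod>x\<in>?S. x)"
    by (simp add: prod.distrib)
  moreover have "(\<Prod>x\<in>?S. x) \<noteq> 0" by simp
  ultimately have a1: "a ^ card ?S = 1" by simp
  have "card (UNIV::'k set) > 0" by (simp add: card_gt_0_iff)
  moreover have "card ?S = card (UNIV::'k set) - 1" by (rule card_Diff_singleton) simp
  ultimately have "card (UNIV::'k set) = Suc (card ?S)" by linarith
  then show ?thesis using a1 by (metis mult.right_neutral power_Suc)
qed

lemma card_ge2: "card (UNIV :: 'k::{finite,field} set) \<ge> 2"
proof -
  have "{0::'k, 1} \<subseteq> UNIV" by simp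
  then have "card {0::'k,1} \<le> card (UNIV::'k set)" by (rule card_mono[OF finite_UNIV])
  then show ?thesis by simp
qed




lemma lookup_minus_nat: "Poly_Mapping.lookup (f - g :: nat \<Rightarrow>\<^sub>0 nat) k = Poly_Mapping.lookup f k - Poly_Mapping.lookup g k"
  by (simp add: minus_poly_mapping.rep_eq)

lemma keys_Am: "q \<ge> 1 \<Longrightarrow> Poly_Mapping.keys (Am q i) = {i, Suc i}"
  by (auto simp: in_keys_iff lookup_Am split: if_splits)
lemma keys_Bm: "q \<ge> 1 \<Longrightarrow> Poly_Mapping.keys (Bm q i) = {i, Suc i}"
  by (auto simp: in_keys_iff lookup_Bm split: if_splits)

lemma mon_pair: "Poly_Mapping.keys m \<subseteq> {i, Suc i} \<Longrightarrow>
  mon m x = x i ^ Poly_Mapping.lookup m i * x (Suc i) ^ Poly_Mapping.lookup m (Suc i)"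
  by (subst mon_superset[of "{i, Suc i}"]) auto

lemma keys_sub_pair: "(\<And>k. k \<noteq> i \<Longrightarrow> k \<noteq> Suc i \<Longrightarrow> Poly_Mapping.lookup m k = 0) \<Longrightarrow>
   Poly_Mapping.keys m \<subseteq> {i, Suc i}"
  by (auto simp: in_keys_iff)

lemma mon_Am: "mon (Am q i) x = x i ^ q * x (Suc i)"
  by (subst mon_pair) (auto intro!: keys_sub_pair simp: lookup_Am)
lemma mon_Bm: "mon (Bm q i) x = x i * x (Suc i) ^ q"
  by (subst mon_pair) (auto intro!: keys_sub_pair simp: lookup_Bm)

lemma sum_over_g:
  assumes "q \<ge> 2"
  shows "(\<Sum>m\<in>Am q ` EE n \<union> Bm q ` EE n. (Poly_Mapping.lookup (gpoly q n :: 'a::comm_ring_1 mpoly) m) * F m)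
    = (\<Sum>i\<in>EE n. F (Am q i)) - (\<Sum>i\<in>EE n. F (Bm q i))"
proof -
  have ia: "inj_on (Am q) (EE n)" using Am_inj[OF assms] by (auto simp: inj_on_def)
  have ib: "inj_on (Bm q) (EE n)" using Bm_inj[OF assms] by (auto simp: inj_on_def)
  have dj: "Am q ` EE n \<inter> Bm q ` EE n = {}"
    using AB_ne[OF assms] by auto
  have "(\<Sum>m\<in>Am q ` EE n \<union> Bm q ` EE n. (Poly_Mapping.lookup (gpoly q n :: 'a mpoly) m) * F m)
     = (\<Sum>m\<in>Am q ` EE n. (Poly_Mapping.lookup (gpoly q n :: 'a mpoly) m) * F m)
      + (\<Sum>m\<in>Bm q ` EE n. (Poly_Mapping.lookup (gpoly q n :: 'a mpoly) m) * F m)"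
    by (rule sum.union_disjoint) (use dj in auto)
  also have "(\<Sum>m\<in>Am q ` EE n. (Poly_Mapping.lookup (gpoly q n :: 'a mpoly) m) * F m)
     = (\<Sum>m\<in>Am q ` EE n. F m)"
    by (rule sum.cong) (auto simp: lookup_g[OF assms])
  also have "(\<Sum>m\<in>Bm q ` EE n. (Poly_Mapping.lookup (gpoly q n :: 'a mpoly) m) * F m)
     = (\<Sum>m\<in>Bm q ` EE n. - F m)"
    by (rule sum.cong) (use dj in \<open>auto simp: lookup_g[OF assms]\<close>)
  finally show ?thesis
    by (simp add: sum.reindex[OF ia] sum.reindex[OF ib] sum_negf)
qed

lemma meval_g: assumes "q \<ge> 2"
  shows "meval (gpoly q n :: 'a::comm_ring_1 mpoly) x
     = (\<Sum>i\<in>EE n. x i ^ q * x (Suc i)) - (\<Sum>i\<in>EE n. x i * x (Suc i) ^ q)"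
  by (subst meval_superset[of "Am q ` EE n \<union> Bm q ` EE n"])
     (auto simp: keys_g[OF assms] sum_over_g[OF assms] mon_Am mon_Bm)

lemma sum_only: "finite E \<Longrightarrow> i \<in> E \<Longrightarrow> (\<And>j. j \<in> E \<Longrightarrow> j \<noteq> i \<Longrightarrow> f j = 0) \<Longrightarrow> sum f E = f i"
  by (simp add: sum.remove sum.neutral)

lemma deriv_odd: assumes "q \<ge> 2" and "of_nat q = (0::'a::comm_ring_1)" and "i \<in> EE n"
  shows "meval (mpderiv (Suc i) (gpoly q n :: 'a mpoly)) x = x i ^ q"
proof -
  let ?e = "Poly_Mapping.single (Suc i) (1::nat)"
  have "meval (mpderiv (Suc i) (gpoly q n :: 'a mpoly)) x =
    (\<Sum>m\<in>Am q ` EE n \<union> Bm q ` EE n. Poly_Mapping.lookup (gpoly q n :: 'a mpoly) m *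
        (of_nat (Poly_Mapping.lookup m (Suc i)) * mon (m - ?e) x))"
    by (subst meval_mpderiv_superset[of "Am q ` EE n \<union> Bm q ` EE n"])
       (auto simp: keys_g[OF assms(1)] ac_simps)
  also have "\<dots> = 
    (\<Sum>j\<in>EE n. of_nat (Poly_Mapping.lookup (Am q j) (Suc i)) * mon (Am q j - ?e) x)
    - (\<Sum>j\<in>EE n. of_nat (Poly_Mapping.lookup (Bm q j) (Suc i)) * mon (Bm q j - ?e) x)"
    by (rule sum_over_g[OF assms(1)])
  also have "(\<Sum>j\<in>EE n. of_nat (Poly_Mapping.lookup (Am q j) (Suc i)) * mon (Am q j - ?e) x)
      = of_nat (Poly_Mapping.lookup (Am q i) (Suc i)) * mon (Am q i - ?e) x"
    by (rule sum_only) (use assms(3) in \<open>auto simp: lookup_Am\<close>)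
  also have "(\<Sum>j\<in>EE n. of_nat (Poly_Mapping.lookup (Bm q j) (Suc i)) * mon (Bm q j - ?e) x)
      = of_nat (Poly_Mapping.lookup (Bm q i) (Suc i)) * mon (Bm q i - ?e) x"
    by (rule sum_only) (use assms(3) in \<open>auto simp: lookup_Bm\<close>)
  also have "mon (Am q i - ?e) x = x i ^ q"
    by (subst mon_pair[of _ i]) (auto intro!: keys_sub_pair simp: lookup_minus_nat lookup_Am lookup_single)
  finally show ?thesis using assms(2) by (simp add: lookup_Am lookup_Bm)
qed

lemma deriv_even: assumes "q \<ge> 2" and "of_nat q = (0::'a::comm_ring_1)" and "i \<in> EE n"
  shows "meval (mpderiv i (gpoly q n :: 'a mpoly)) x = - (x (Suc i) ^ q)"
proof -
  let ?e = "Poly_Mapping.single i (1::nat)"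
  have "meval (mpderiv i (gpoly q n :: 'a mpoly)) x =
    (\<Sum>m\<in>Am q ` EE n \<union> Bm q ` EE n. Poly_Mapping.lookup (gpoly q n :: 'a mpoly) m *
        (of_nat (Poly_Mapping.lookup m i) * mon (m - ?e) x))"
    by (subst meval_mpderiv_superset[of "Am q ` EE n \<union> Bm q ` EE n"])
       (auto simp: keys_g[OF assms(1)] ac_simps)
  also have "\<dots> = 
    (\<Sum>j\<in>EE n. of_nat (Poly_Mapping.lookup (Am q j) i) * mon (Am q j - ?e) x)
    - (\<Sum>j\<in>EE n. of_nat (Poly_Mapping.lookup (Bm q j) i) * mon (Bm q j - ?e) x)"
    by (rule sum_over_g[OF assms(1)])
  also have "(\<Sum>j\<in>EE n. of_nat (Poly_Mapping.lookup (Am q j) i) * mon (Am q j - ?e) x)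
      = of_nat (Poly_Mapping.lookup (Am q i) i) * mon (Am q i - ?e) x"
    by (rule sum_only) (use assms(3) in \<open>auto simp: lookup_Am\<close>)
  also have "(\<Sum>j\<in>EE n. of_nat (Poly_Mapping.lookup (Bm q j) i) * mon (Bm q j - ?e) x)
      = of_nat (Poly_Mapping.lookup (Bm q i) i) * mon (Bm q i - ?e) x"
    by (rule sum_only) (use assms(3) in \<open>auto simp: lookup_Bm\<close>)
  also have "mon (Bm q i - ?e) x = x (Suc i) ^ q"
    by (subst mon_pair[of _ i]) (auto intro!: keys_sub_pair simp: lookup_minus_nat lookup_Bm lookup_single)
  finally show ?thesis using assms(2) by (simp add: lookup_Am lookup_Bm)
qed

lemma smooth_g: assumes "odd n" "q \<ge> 2" "of_nat q = (0::'a::field)"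
  shows "smooth_hypersurface n (gpoly q n :: 'a mpoly)"
  unfolding smooth_hypersurface_def
proof (intro allI impI notI)
  fix x :: "nat \<Rightarrow> 'a"
  assume ex: "\<exists>i\<le>n. x i \<noteq> 0"
    and h: "meval (gpoly q n) x = 0 \<and> (\<forall>i\<le>n. meval (mpderiv i (gpoly q n)) x = 0)"
  have "x k = 0" if "k \<le> n" for k
  proof (cases "even k")
    case True
    with that assms(1) have "k \<in> EE n" by (cases "k = n") auto
    then have "x k ^ q = 0" using h deriv_odd[OF assms(2,3), of k n x] that assms(1)
      by (metis Suc_leI True even_Suc le_neq_implies_less mem_Collect_eq)
    then show ?thesis by simp
  next
    case False
    then obtain i where i: "k = Suc i" by (cases k) auto
    with False that have "i \<in> EE n" by auto
    then have "- (x k ^ q) = 0" using h deriv_even[OF assms(2,3), of i n x] that i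
      by (metis Suc_leD)
    then show ?thesis by simp
  qed
  with ex show False by auto
qed




definition kap :: "nat \<Rightarrow> int \<Rightarrow> nat \<Rightarrow> int \<Rightarrow> (nat \<Rightarrow>\<^sub>0 nat) \<Rightarrow> nat \<Rightarrow> int" where
  "kap j1 s1 j2 s2 m i = (if i = 0 then s1 * int (Poly_Mapping.lookup m j1)
     else if i = Suc 0 then s2 * int (Poly_Mapping.lookup m j2) else int (Poly_Mapping.lookup m (i - 2)))"

definition KR :: "nat \<Rightarrow> int \<Rightarrow> nat \<Rightarrow> int \<Rightarrow> (nat \<Rightarrow>\<^sub>0 nat) \<Rightarrow> (nat \<Rightarrow>\<^sub>0 nat) \<Rightarrow> bool" where
  "KR j1 s1 j2 s2 x y \<longleftrightarrow> (\<exists>i. kap j1 s1 j2 s2 x i < kap j1 s1 j2 s2 y i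
      \<and> (\<forall>j<i. kap j1 s1 j2 s2 x j = kap j1 s1 j2 s2 y j))"

lemma kap_add: "kap j1 s1 j2 s2 (x + z) i = kap j1 s1 j2 s2 x i + kap j1 s1 j2 s2 z i"
  by (simp add: kap_def lookup_add algebra_simps)

lemma kap_inj: assumes "kap j1 s1 j2 s2 x = kap j1 s1 j2 s2 y" shows "x = y"
proof (rule poly_mapping_eqI)
  fix k
  have "kap j1 s1 j2 s2 x (k + 2) = kap j1 s1 j2 s2 y (k + 2)" using assms by simp
  then show "Poly_Mapping.lookup x k = Poly_Mapping.lookup y k" by (simp add: kap_def)
qed

lemma KR_irrefl: "\<not> KR j1 s1 j2 s2 x x"
  by (auto simp: KR_def)

lemma KR_trans: assumes "KR j1 s1 j2 s2 x y" "KR j1 s1 j2 s2 y z" shows "KR j1 s1 j2 s2 x z"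
proof -
  let ?k = "kap j1 s1 j2 s2"
  from assms obtain i i' where i: "?k x i < ?k y i" "\<forall>j<i. ?k x j = ?k y j"
    and i': "?k y i' < ?k z i'" "\<forall>j<i'. ?k y j = ?k z j" by (auto simp: KR_def)
  show ?thesis unfolding KR_def
  proof (cases "i < i'")
    case True then show "\<exists>i. ?k x i < ?k z i \<and> (\<forall>j<i. ?k x j = ?k z j)"
      using i i' by (intro exI[of _ i]) auto
  next
    case False then show "\<exists>i. ?k x i < ?k z i \<and> (\<forall>j<i. ?k x j = ?k z j)"
      using i i' by (intro exI[of _ i']) (auto simp: not_less le_less)
  qed
qed

lemma KR_total: assumes "x \<noteq> y" shows "KR j1 s1 j2 s2 x y \<or> KR j1 s1 j2 s2 y x"
proof -
  let ?k = "kap j1 s1 j2 s2"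
  have "?k x \<noteq> ?k y" using assms kap_inj by blast
  then obtain i where "?k x i \<noteq> ?k y i" by auto
  define i0 where "i0 = (LEAST i. ?k x i \<noteq> ?k y i)"
  have ne: "?k x i0 \<noteq> ?k y i0" unfolding i0_def by (rule LeastI) fact
  have eq: "\<forall>j<i0. ?k x j = ?k y j" unfolding i0_def using not_less_Least by blast
  show ?thesis
  proof (cases "?k x i0 < ?k y i0")
    case True then show ?thesis using eq unfolding KR_def by blast
  next
    case False then have "?k y i0 < ?k x i0" using ne by auto
    then show ?thesis using eq unfolding KR_def by (metis)
  qed
qed

lemma KR_mono: "KR j1 s1 j2 s2 x y \<Longrightarrow> KR j1 s1 j2 s2 (x + z) (y + z)"
  unfolding KR_def kap_add by auto

lemma KR_mono_l: "KR j1 s1 j2 s2 x y \<Longrightarrow> KR j1 s1 j2 s2 (z + x) (z + y)"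
  using KR_mono by (metis add.commute)

definition ismax where
  "ismax j1 s1 j2 s2 p m \<longleftrightarrow> m \<in> Poly_Mapping.keys p \<and>
     (\<forall>m'\<in>Poly_Mapping.keys p. m' \<noteq> m \<longrightarrow> KR j1 s1 j2 s2 m' m)"

lemma max_exists_set: "finite S \<Longrightarrow> S \<noteq> {} \<Longrightarrow> \<exists>m\<in>S. \<forall>m'\<in>S. m' \<noteq> m \<longrightarrow> KR j1 s1 j2 s2 m' m"
proof (induction S rule: finite_ne_induct)
  case (singleton x) then show ?case by auto
next
  case (insert x F)
  then obtain m where m: "m \<in> F" "\<forall>m'\<in>F. m' \<noteq> m \<longrightarrow> KR j1 s1 j2 s2 m' m" by auto
  show ?case
  proof (cases "KR j1 s1 j2 s2 m x")
    case True
    have "\<forall>m'\<in>insert x F. m' \<noteq> x \<longrightarrow> KR j1 s1 j2 s2 m' x"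
    proof (intro ballI impI)
      fix m' assume "m' \<in> insert x F" "m' \<noteq> x"
      then have "m' \<in> F" by auto
      show "KR j1 s1 j2 s2 m' x"
      proof (cases "m' = m")
        case True then show ?thesis using \<open>KR j1 s1 j2 s2 m x\<close> by simp
      next
        case False then show ?thesis using m \<open>m' \<in> F\<close> KR_trans \<open>KR j1 s1 j2 s2 m x\<close> by blast
      qed
    qed
    then show ?thesis by blast
  next
    case False
    then have "x = m \<or> KR j1 s1 j2 s2 x m" using KR_total by blast
    then show ?thesis using m by (intro bexI[of _ m]) auto
  qed
qed

lemma max_exists: "p \<noteq> 0 \<Longrightarrow> \<exists>m. ismax j1 s1 j2 s2 p m"
  using max_exists_set[of "Poly_Mapping.keys p" j1 s1 j2 s2] unfolding ismax_def by auto

lemma ismax_prop: assumes "ismax j1 s1 j2 s2 p m" "m' \<in> Poly_Mapping.keys p"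
  shows "s1 * int (Poly_Mapping.lookup m' j1) \<le> s1 * int (Poly_Mapping.lookup m j1)
    \<and> (s1 * int (Poly_Mapping.lookup m' j1) = s1 * int (Poly_Mapping.lookup m j1) \<longrightarrow>
        s2 * int (Poly_Mapping.lookup m' j2) \<le> s2 * int (Poly_Mapping.lookup m j2))"
proof (cases "m' = m")
  case True then show ?thesis by simp
next
  case False
  then have "KR j1 s1 j2 s2 m' m" using assms unfolding ismax_def by auto
  then obtain i where i: "kap j1 s1 j2 s2 m' i < kap j1 s1 j2 s2 m i"
     "\<forall>j<i. kap j1 s1 j2 s2 m' j = kap j1 s1 j2 s2 m j" unfolding KR_def by auto
  show ?thesis
  proof (cases "i = 0")
    case True
    then have lt: "s1 * int (Poly_Mapping.lookup m' j1) < s1 * int (Poly_Mapping.lookup m j1)"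
      using i by (simp add: kap_def)
    show ?thesis
    proof (intro conjI impI)
      show "s1 * int (Poly_Mapping.lookup m' j1) \<le> s1 * int (Poly_Mapping.lookup m j1)" using lt by simp
    next
      assume "s1 * int (Poly_Mapping.lookup m' j1) = s1 * int (Poly_Mapping.lookup m j1)"
      then show "s2 * int (Poly_Mapping.lookup m' j2) \<le> s2 * int (Poly_Mapping.lookup m j2)" using lt by linarith
    qed
  next
    case False
    then have "kap j1 s1 j2 s2 m' 0 = kap j1 s1 j2 s2 m 0" using i by auto
    moreover have "kap j1 s1 j2 s2 m' (Suc 0) \<le> kap j1 s1 j2 s2 m (Suc 0)"
    proof (cases "i = Suc 0")
      case True then show ?thesis using i by simp
    next
      case F2: False
      then have "Suc 0 < i" using False by simp
      then show ?thesis using i by simp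
    qed
    ultimately have e0: "s1 * int (Poly_Mapping.lookup m' j1) = s1 * int (Poly_Mapping.lookup m j1)"
      and e1: "s2 * int (Poly_Mapping.lookup m' j2) \<le> s2 * int (Poly_Mapping.lookup m j2)"
      by (simp_all add: kap_def)
    show ?thesis using e0 e1 by (metis order_refl)
  qed
qed

lemma ismax_mult:
  fixes a b :: "'a::field mpoly"
  assumes ma: "ismax j1 s1 j2 s2 a ma" and mb: "ismax j1 s1 j2 s2 b mb"
  shows "ismax j1 s1 j2 s2 (a * b) (ma + mb)"
proof -
  let ?R = "KR j1 s1 j2 s2"
  define ca where "ca = Poly_Mapping.lookup a ma"
  define cb where "cb = Poly_Mapping.lookup b mb"
  define a' where "a' = a - Poly_Mapping.single ma ca"
  define b' where "b' = b - Poly_Mapping.single mb cb"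
  have ca: "ca \<noteq> 0" using ma unfolding ismax_def ca_def by (simp add: in_keys_iff)
  have cb: "cb \<noteq> 0" using mb unfolding ismax_def cb_def by (simp add: in_keys_iff)
  have ka': "\<forall>k\<in>Poly_Mapping.keys a'. ?R k ma"
  proof
    fix k assume k: "k \<in> Poly_Mapping.keys a'"
    have "Poly_Mapping.lookup a' ma = 0" by (simp add: a'_def ca_def lookup_minus)
    then have "k \<noteq> ma" using k by (auto simp: in_keys_iff)
    moreover have "k \<in> Poly_Mapping.keys a"
    proof (rule ccontr)
      assume "k \<notin> Poly_Mapping.keys a"
      then have "Poly_Mapping.lookup a' k = 0" using \<open>k \<noteq> ma\<close>
        by (simp add: a'_def in_keys_iff lookup_minus lookup_single_not_eq)
      then show False using k by (simp add: in_keys_iff)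
    qed
    ultimately show "?R k ma" using ma unfolding ismax_def by auto
  qed
  have kb': "\<forall>k\<in>Poly_Mapping.keys b'. ?R k mb"
  proof
    fix k assume k: "k \<in> Poly_Mapping.keys b'"
    have "Poly_Mapping.lookup b' mb = 0" by (simp add: b'_def cb_def lookup_minus)
    then have "k \<noteq> mb" using k by (auto simp: in_keys_iff)
    moreover have "k \<in> Poly_Mapping.keys b"
    proof (rule ccontr)
      assume "k \<notin> Poly_Mapping.keys b"
      then have "Poly_Mapping.lookup b' k = 0" using \<open>k \<noteq> mb\<close>
        by (simp add: b'_def in_keys_iff lookup_minus lookup_single_not_eq)
      then show False using k by (simp add: in_keys_iff)
    qed
    ultimately show "?R k mb" using mb unfolding ismax_def by auto
  qed
  define T where "T = Poly_Mapping.single ma ca * b' + a' * Poly_Mapping.single mb cb + a' * b'"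
  have ab: "a * b = Poly_Mapping.single (ma + mb) (ca * cb) + T"
  proof -
    have "a = Poly_Mapping.single ma ca + a'" "b = Poly_Mapping.single mb cb + b'"
      by (simp_all add: a'_def b'_def)
    then have "a * b = (Poly_Mapping.single ma ca + a') * (Poly_Mapping.single mb cb + b')" by simp
    also have "\<dots> = Poly_Mapping.single ma ca * Poly_Mapping.single mb cb + T"
      by (simp add: T_def algebra_simps)
    finally show ?thesis by (simp add: mult_single)
  qed
  have kT: "\<forall>k\<in>Poly_Mapping.keys T. ?R k (ma + mb)"
  proof
    fix k assume "k \<in> Poly_Mapping.keys T"
    then have "k \<in> Poly_Mapping.keys (Poly_Mapping.single ma ca * b') \<or>
       k \<in> Poly_Mapping.keys (a' * Poly_Mapping.single mb cb) \<or> k \<in> Poly_Mapping.keys (a' * b')"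
      unfolding T_def using keys_add[of "Poly_Mapping.single ma ca * b' + a' * Poly_Mapping.single mb cb" "a' * b'"]
        keys_add[of "Poly_Mapping.single ma ca * b'" "a' * Poly_Mapping.single mb cb"] by auto
    then show "?R k (ma + mb)"
    proof (elim disjE)
      assume "k \<in> Poly_Mapping.keys (Poly_Mapping.single ma ca * b')"
      then obtain u v where "k = u + v" "u \<in> Poly_Mapping.keys (Poly_Mapping.single ma ca)" "v \<in> Poly_Mapping.keys b'"
        using keys_mult[of "Poly_Mapping.single ma ca" b'] by blast
      then have "u = ma" "?R v mb" using kb' by (auto split: if_splits)
      then show ?thesis using \<open>k = u + v\<close> KR_mono_l[of j1 s1 j2 s2 v mb ma] by simp
    next
      assume "k \<in> Poly_Mapping.keys (a' * Poly_Mapping.single mb cb)"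
      then obtain u v where "k = u + v" "u \<in> Poly_Mapping.keys a'" "v \<in> Poly_Mapping.keys (Poly_Mapping.single mb cb)"
        using keys_mult[of a' "Poly_Mapping.single mb cb"] by blast
      then have "v = mb" "?R u ma" using ka' by (auto split: if_splits)
      then show ?thesis using \<open>k = u + v\<close> KR_mono[of j1 s1 j2 s2 u ma mb] by simp
    next
      assume "k \<in> Poly_Mapping.keys (a' * b')"
      then obtain u v where uv: "k = u + v" "u \<in> Poly_Mapping.keys a'" "v \<in> Poly_Mapping.keys b'"
        using keys_mult[of a' b'] by blast
      then have "?R (u + v) (ma + v)" "?R (ma + v) (ma + mb)"
        using ka' kb' KR_mono[of j1 s1 j2 s2 u ma v] KR_mono_l[of j1 s1 j2 s2 v mb ma] by auto
      then show ?thesis using uv KR_trans by blast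
    qed
  qed
  have T0: "Poly_Mapping.lookup T (ma + mb) = 0"
  proof (rule ccontr)
    assume "Poly_Mapping.lookup T (ma + mb) \<noteq> 0"
    then have "ma + mb \<in> Poly_Mapping.keys T" by (simp add: in_keys_iff)
    then show False using kT KR_irrefl[of j1 s1 j2 s2 "ma + mb"] by blast
  qed
  have "Poly_Mapping.lookup (a * b) (ma + mb) = ca * cb"
    by (simp add: ab lookup_add T0)
  then have inkeys: "ma + mb \<in> Poly_Mapping.keys (a * b)" using ca cb by (simp add: in_keys_iff)
  have "\<forall>k\<in>Poly_Mapping.keys (a * b). k \<noteq> ma + mb \<longrightarrow> ?R k (ma + mb)"
  proof (intro ballI impI)
    fix k assume k: "k \<in> Poly_Mapping.keys (a * b)" "k \<noteq> ma + mb"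
    then have "Poly_Mapping.lookup T k \<noteq> 0"
      by (simp add: ab lookup_add lookup_single in_keys_iff when_def)
    then show "?R k (ma + mb)" using kT by (simp add: in_keys_iff)
  qed
  with inkeys show ?thesis unfolding ismax_def by blast
qed

lemma factor_max:
  fixes a b :: "'a::field mpoly"
  assumes "a \<noteq> 0" "b \<noteq> 0"
  obtains ma mb where "ismax j1 s1 j2 s2 a ma" "ismax j1 s1 j2 s2 b mb"
    "ismax j1 s1 j2 s2 (a * b) (ma + mb)"
  using max_exists[OF assms(1)] max_exists[OF assms(2)] ismax_mult by blast




definition free :: "'a::zero mpoly \<Rightarrow> nat \<Rightarrow> bool" where
  "free c j \<longleftrightarrow> (\<forall>m\<in>Poly_Mapping.keys c. Poly_Mapping.lookup m j = 0)"

lemma kG: "q \<ge> 2 \<Longrightarrow> m \<in> Poly_Mapping.keys (gpoly q n :: 'a::comm_ring_1 mpoly) \<longleftrightarrow>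
   (\<exists>j\<in>EE n. m = Am q j \<or> m = Bm q j)"
  by (auto simp: keys_g)

lemma F1: assumes "q \<ge> 2" "m \<in> Poly_Mapping.keys (gpoly q n :: 'a::comm_ring_1 mpoly)" "i \<in> EE n"
    "Poly_Mapping.lookup m i = 0 \<or> Poly_Mapping.lookup m (Suc i) = 0"
  shows "Poly_Mapping.lookup m i = 0 \<and> Poly_Mapping.lookup m (Suc i) = 0"
proof -
  obtain j where j: "j \<in> EE n" "m = Am q j \<or> m = Bm q j" using kG[OF assms(1)] assms(2) by blast
  show ?thesis using j assms by (auto simp: lookup_Am lookup_Bm split: if_splits)
qed

lemma F2: assumes "q \<ge> 2" "i \<in> EE n" "n \<ge> 3"
  shows "\<exists>m\<in>Poly_Mapping.keys (gpoly q n :: 'a::comm_ring_1 mpoly).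
     Poly_Mapping.lookup m i = 0 \<and> Poly_Mapping.lookup m (Suc i) = 0"
proof -
  define i2 where "i2 = (if i = 0 then 2 else (0::nat))"
  have "i2 \<in> EE n" using assms by (auto simp: i2_def)
  then have "Am q i2 \<in> Poly_Mapping.keys (gpoly q n :: 'a mpoly)" using kG[OF assms(1)] by blast
  moreover have "Poly_Mapping.lookup (Am q i2) i = 0 \<and> Poly_Mapping.lookup (Am q i2) (Suc i) = 0"
    using assms by (auto simp: i2_def lookup_Am)
  ultimately show ?thesis by blast
qed

lemma F3: assumes "q \<ge> 2" "m \<in> Poly_Mapping.keys (gpoly q n :: 'a::comm_ring_1 mpoly)" "i \<in> EE n"
    "Poly_Mapping.lookup m (Suc i) \<ge> 2"
  shows "Poly_Mapping.lookup m i = 1"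
proof -
  obtain j where j: "j \<in> EE n" "m = Am q j \<or> m = Bm q j" using kG[OF assms(1)] assms(2) by blast
  show ?thesis using j assms by (auto simp: lookup_Am lookup_Bm split: if_splits)
qed

lemma F4: assumes "q \<ge> 2" "m \<in> Poly_Mapping.keys (gpoly q n :: 'a::comm_ring_1 mpoly)" "i \<in> EE n" "i' \<in> EE n"
    "Poly_Mapping.lookup m i > 0" "Poly_Mapping.lookup m i' > 0"
  shows "i = i'"
proof -
  obtain j where j: "j \<in> EE n" "m = Am q j \<or> m = Bm q j" using kG[OF assms(1)] assms(2) by blast
  show ?thesis using j assms by (auto simp: lookup_Am lookup_Bm split: if_splits)
qed

lemma F5: assumes "q \<ge> 2" "m \<in> Poly_Mapping.keys (gpoly q n :: 'a::comm_ring_1 mpoly)" "k > n"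
  shows "Poly_Mapping.lookup m k = 0"
proof -
  obtain j where j: "j \<in> EE n" "m = Am q j \<or> m = Bm q j" using kG[OF assms(1)] assms(2) by blast
  show ?thesis using j assms by (auto simp: lookup_Am lookup_Bm)
qed

lemma zero_implies:
  fixes a b :: "'a::field mpoly"
  assumes q: "q \<ge> 2" and n: "n \<ge> 3" and G: "gpoly q n = a * b" and a: "a \<noteq> 0" and b: "b \<noteq> 0"
    and i: "i \<in> EE n" and jj: "(j = i \<and> j' = Suc i) \<or> (j = Suc i \<and> j' = i)"
    and m: "m \<in> Poly_Mapping.keys a" "Poly_Mapping.lookup m j = 0"
  shows "Poly_Mapping.lookup m j' = 0"
proof -
  obtain ma mb where ma: "ismax j (-1) j' 1 a ma" and mb: "ismax j (-1) j' 1 b mb"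
    and mg: "ismax j (-1) j' 1 (a * b) (ma + mb)"
    using factor_max[OF a b] by blast
  have mgk: "ma + mb \<in> Poly_Mapping.keys (gpoly q n :: 'a mpoly)" using mg G unfolding ismax_def by simp
  obtain m0 where m0: "m0 \<in> Poly_Mapping.keys (gpoly q n :: 'a mpoly)"
    "Poly_Mapping.lookup m0 i = 0 \<and> Poly_Mapping.lookup m0 (Suc i) = 0"
    using F2[OF q i n] by blast
  have m0': "Poly_Mapping.lookup m0 j = 0" using m0 jj by auto
  have "- int (Poly_Mapping.lookup m0 j) \<le> - int (Poly_Mapping.lookup (ma + mb) j)"
    using ismax_prop[OF mg, of m0] m0 G by simp
  then have "Poly_Mapping.lookup (ma + mb) j = 0" using m0' by simp
  then have "Poly_Mapping.lookup (ma + mb) j = 0 \<and> Poly_Mapping.lookup (ma + mb) j' = 0"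
    using F1[OF q mgk i] jj by auto
  then have maj: "Poly_Mapping.lookup ma j = 0" "Poly_Mapping.lookup ma j' = 0" by (simp_all add: lookup_add)
  show ?thesis using ismax_prop[OF ma m(1)] m(2) maj by simp
qed

lemma owner_side:
  fixes c d :: "'a::field mpoly"
  assumes q: "q \<ge> 2" and n: "n \<ge> 3" and G: "gpoly q n = c * d" and c: "c \<noteq> 0" and d: "d \<noteq> 0"
    and i: "i \<in> EE n" and mc: "ismax (Suc i) 1 i 1 c mc" "Poly_Mapping.lookup mc i = 0"
  shows "free c i \<and> free c (Suc i)"
proof -
  have mck: "mc \<in> Poly_Mapping.keys c" using mc unfolding ismax_def by simp
  have z: "Poly_Mapping.lookup mc (Suc i) = 0"
    using zero_implies[OF q n G c d i, of i "Suc i" mc] mck mc(2) by simp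
  have fs: "free c (Suc i)" unfolding free_def
  proof
    fix m assume "m \<in> Poly_Mapping.keys c"
    then show "Poly_Mapping.lookup m (Suc i) = 0" using ismax_prop[OF mc(1), of m] z by simp
  qed
  moreover have "free c i" unfolding free_def
  proof
    fix m assume m: "m \<in> Poly_Mapping.keys c"
    then show "Poly_Mapping.lookup m i = 0"
      using zero_implies[OF q n G c d i, of "Suc i" i m] fs unfolding free_def by simp
  qed
  ultimately show ?thesis by simp
qed

lemma pair_owner:
  fixes a b :: "'a::field mpoly"
  assumes q: "q \<ge> 2" and n: "n \<ge> 3" and G: "gpoly q n = a * b" and a: "a \<noteq> 0" and b: "b \<noteq> 0"
    and i: "i \<in> EE n"
  shows "(free a i \<and> free a (Suc i) \<and> (\<exists>m\<in>Poly_Mapping.keys b. Poly_Mapping.lookup m i > 0))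
       \<or> (free b i \<and> free b (Suc i) \<and> (\<exists>m\<in>Poly_Mapping.keys a. Poly_Mapping.lookup m i > 0))"
proof -
  obtain ma mb where ma: "ismax (Suc i) 1 i 1 a ma" and mb: "ismax (Suc i) 1 i 1 b mb"
    and mg: "ismax (Suc i) 1 i 1 (a * b) (ma + mb)"
    using factor_max[OF a b] by blast
  have mgk: "ma + mb \<in> Poly_Mapping.keys (gpoly q n :: 'a mpoly)" using mg G unfolding ismax_def by simp
  have "Bm q i \<in> Poly_Mapping.keys (gpoly q n :: 'a mpoly)" using kG[OF q] i by blast
  then have "int q \<le> int (Poly_Mapping.lookup (ma + mb) (Suc i))"
    using ismax_prop[OF mg, of "Bm q i"] G by (simp add: lookup_Bm)
  then have "Poly_Mapping.lookup (ma + mb) i = 1" using F3[OF q mgk i] q by simp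
  then have s: "Poly_Mapping.lookup ma i + Poly_Mapping.lookup mb i = 1" by (simp add: lookup_add)
  have G': "gpoly q n = b * a" using G by (simp add: mult.commute)
  have mak: "ma \<in> Poly_Mapping.keys a" and mbk: "mb \<in> Poly_Mapping.keys b" using ma mb unfolding ismax_def by auto
  show ?thesis
  proof (cases "Poly_Mapping.lookup ma i = 0")
    case True
    then show ?thesis using owner_side[OF q n G a b i ma True] s mbk by auto
  next
    case False
    then have "Poly_Mapping.lookup mb i = 0" using s by simp
    then show ?thesis using owner_side[OF q n G' b a i mb] s mak by auto
  qed
qed

lemma cross:
  fixes a b :: "'a::field mpoly"
  assumes q: "q \<ge> 2" and G: "gpoly q n = a * b" and a: "a \<noteq> 0" and b: "b \<noteq> 0"
    and i: "i \<in> EE n" and i': "i' \<in> EE n" and ne: "i \<noteq> i'"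
    and fa: "free a i" and m1: "m1 \<in> Poly_Mapping.keys b" "Poly_Mapping.lookup m1 i > 0"
    and fb: "free b i'" and m2: "m2 \<in> Poly_Mapping.keys a" "Poly_Mapping.lookup m2 i' > 0"
  shows False
proof -
  obtain ma mb where ma: "ismax i 1 i' 1 a ma" and mb: "ismax i 1 i' 1 b mb"
    and mg: "ismax i 1 i' 1 (a * b) (ma + mb)"
    using factor_max[OF a b] by blast
  have mgk: "ma + mb \<in> Poly_Mapping.keys (gpoly q n :: 'a mpoly)" using mg G unfolding ismax_def by simp
  have mak: "ma \<in> Poly_Mapping.keys a" using ma unfolding ismax_def by auto
  have "Poly_Mapping.lookup mb i > 0" using ismax_prop[OF mb m1(1)] m1(2) by simp
  moreover have "Poly_Mapping.lookup ma i' > 0"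
  proof -
    have "Poly_Mapping.lookup m2 i = 0" "Poly_Mapping.lookup ma i = 0"
      using fa m2(1) mak unfolding free_def by auto
    then show ?thesis using ismax_prop[OF ma m2(1)] m2(2) by (auto intro: less_le_trans)
  qed
  ultimately have "Poly_Mapping.lookup (ma + mb) i > 0" "Poly_Mapping.lookup (ma + mb) i' > 0"
    by (simp_all add: lookup_add)
  then show False using F4[OF q mgk i i'] ne by simp
qed

lemma beyond:
  fixes a b :: "'a::field mpoly"
  assumes q: "q \<ge> 2" and G: "gpoly q n = a * b" and a: "a \<noteq> 0" and b: "b \<noteq> 0" and k: "k > n"
  shows "free a k"
proof -
  obtain ma mb where ma: "ismax k 1 k 1 a ma" and mb: "ismax k 1 k 1 b mb"
    and mg: "ismax k 1 k 1 (a * b) (ma + mb)"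
    using factor_max[OF a b] by blast
  have mgk: "ma + mb \<in> Poly_Mapping.keys (gpoly q n :: 'a mpoly)" using mg G unfolding ismax_def by simp
  have "Poly_Mapping.lookup ma k = 0" using F5[OF q mgk k] by (simp add: lookup_add)
  then show ?thesis unfolding free_def using ismax_prop[OF ma] by fastforce
qed

lemma unit_const:
  fixes a :: "'a::field mpoly"
  assumes a: "a \<noteq> 0" and f: "\<forall>k. free a k"
  shows "a dvd 1"
proof -
  have km: "\<forall>m\<in>Poly_Mapping.keys a. m = 0"
    using f unfolding free_def by (auto intro: poly_mapping_eqI)
  define c where "c = Poly_Mapping.lookup a 0"
  have aeq: "a = Poly_Mapping.single 0 c"
  proof (rule poly_mapping_eqI)
    fix k show "Poly_Mapping.lookup a k = Poly_Mapping.lookup (Poly_Mapping.single 0 c) k"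
      using km by (cases "k = 0") (auto simp: c_def lookup_single_not_eq in_keys_iff)
  qed
  have "c \<noteq> 0" using a aeq by auto
  then have "a * Poly_Mapping.single 0 (inverse c) = 1" by (simp add: aeq mult_single)
  then show ?thesis by (metis dvdI)
qed

lemma owner_unit:
  fixes a b :: "'a::field mpoly"
  assumes q: "q \<ge> 2" and n: "n \<ge> 3" "odd n" and G: "gpoly q n = a * b" and a: "a \<noteq> 0" and b: "b \<noteq> 0"
    and fa: "free a 0" and m1: "m1 \<in> Poly_Mapping.keys b" "Poly_Mapping.lookup m1 0 > 0"
  shows "a dvd 1"
proof -
  have z: "0 \<in> EE n" using n by auto
  have pairs: "free a i \<and> free a (Suc i)" if i: "i \<in> EE n" for i
  proof -
    have "\<not> (free b i \<and> (\<exists>m\<in>Poly_Mapping.keys a. Poly_Mapping.lookup m i > 0))"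
    proof
      assume h: "free b i \<and> (\<exists>m\<in>Poly_Mapping.keys a. Poly_Mapping.lookup m i > 0)"
      then obtain m2 where m2: "m2 \<in> Poly_Mapping.keys a" "Poly_Mapping.lookup m2 i > 0" by blast
      show False
      proof (cases "i = 0")
        case True then show False using fa m2 unfolding free_def by auto
      next
        case False
        show False using cross[OF q G a b z i _ fa m1 _ m2] False h by auto
      qed
    qed
    then show ?thesis using pair_owner[OF q n(1) G a b i] by blast
  qed
  have "free a k" for k
  proof (cases "k \<le> n")
    case True
    show ?thesis
    proof (cases "even k")
      case True
      then have "k \<in> EE n" using \<open>k \<le> n\<close> n(2) by (cases "k = n") auto
      then show ?thesis using pairs by blast
    next
      case False
      then obtain i where "k = Suc i" by (cases k) auto
      then have "i \<in> EE n" using False \<open>k \<le> n\<close> by auto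
      then show ?thesis using pairs \<open>k = Suc i\<close> by blast
    qed
  next
    case False
    then show ?thesis using beyond[OF q G a b] by simp
  qed
  then show ?thesis using unit_const[OF a] by blast
qed

lemma g_ne0: assumes "q \<ge> 2" "odd n" shows "(gpoly q n :: 'a::comm_ring_1 mpoly) \<noteq> 0"
proof -
  have "0 \<in> EE n" using assms by (auto intro: odd_pos)
  then have "Am q 0 \<in> Poly_Mapping.keys (gpoly q n :: 'a mpoly)" using kG[OF assms(1)] by blast
  then show ?thesis by auto
qed

lemma g_not_unit: assumes q: "q \<ge> 2" "odd n" shows "\<not> (gpoly q n :: 'a::field mpoly) dvd 1"
proof
  assume "gpoly q n dvd (1 :: 'a mpoly)"
  then obtain b where b: "1 = (gpoly q n :: 'a mpoly) * b" by (auto elim: dvdE)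
  have g0: "(gpoly q n :: 'a mpoly) \<noteq> 0" using g_ne0[OF q] .
  have "b \<noteq> 0" using b by auto
  then obtain mg mb where mg: "ismax 0 1 0 1 (gpoly q n :: 'a mpoly) mg" and
     mp: "ismax 0 1 0 1 ((gpoly q n :: 'a mpoly) * b) (mg + mb)"
    using factor_max[OF g0] by metis
  have "mg + mb \<in> Poly_Mapping.keys (1 :: 'a mpoly)" using mp b unfolding ismax_def by simp
  then have "mg + mb = 0" by simp
  then have mg0: "mg = 0" by (metis add_is_0 lookup_add lookup_zero poly_mapping_eqI)
  have "mg \<in> Poly_Mapping.keys (gpoly q n :: 'a mpoly)" using mg unfolding ismax_def by simp
  then obtain j where "mg = Am q j \<or> mg = Bm q j" using kG[OF q(1)] by blast
  then have "Poly_Mapping.lookup mg j \<noteq> 0" using q by (auto simp: lookup_Am lookup_Bm)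
  then show False using mg0 by simp
qed

lemma g_irreducible: assumes q: "q \<ge> 2" and n: "n \<ge> 3" "odd n"
  shows "irreducible (gpoly q n :: 'a::field mpoly)"
proof (rule irreducibleI)
  show "(gpoly q n :: 'a mpoly) \<noteq> 0" using g_ne0[OF q n(2)] .
  show "\<not> (gpoly q n :: 'a mpoly) dvd 1" using g_not_unit[OF q n(2)] .
next
  fix a b :: "'a mpoly"
  assume G: "gpoly q n = a * b"
  have a: "a \<noteq> 0" and b: "b \<noteq> 0" using G g_ne0[OF q n(2), where 'a='a] by auto
  have z: "0 \<in> EE n" using n by auto
  from pair_owner[OF q n(1) G a b z] show "a dvd 1 \<or> b dvd 1"
  proof
    assume "free a 0 \<and> free a (Suc 0) \<and> (\<exists>m\<in>Poly_Mapping.keys b. Poly_Mapping.lookup m 0 > 0)"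
    then show ?thesis using owner_unit[OF q n G a b] by blast
  next
    assume "free b 0 \<and> free b (Suc 0) \<and> (\<exists>m\<in>Poly_Mapping.keys a. Poly_Mapping.lookup m 0 > 0)"
    moreover have "gpoly q n = b * a" using G by (simp add: mult.commute)
    ultimately show ?thesis using owner_unit[OF q n _ b a] by blast
  qed
qed




lemma hom_neg1: assumes "ring_hom_fun (\<phi> :: 'a::comm_ring_1 \<Rightarrow> 'b::comm_ring_1)" shows "\<phi> (-1) = -1"
proof -
  have "\<phi> (-1 + 1) = \<phi> (-1) + \<phi> 1" using assms unfolding ring_hom_fun_def by blast
  then have "0 = \<phi> (-1) + 1" using assms unfolding ring_hom_fun_def by simp
  then show ?thesis by (simp add: eq_neg_iff_add_eq_0 add.commute)
qed

lemma hom_of_nat: assumes "ring_hom_fun (\<phi> :: 'a::comm_ring_1 \<Rightarrow> 'b::comm_ring_1)" shows "\<phi> (of_nat k) = of_nat k"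
  using assms unfolding ring_hom_fun_def by (induction k) auto

lemma map_g: assumes "ring_hom_fun (\<phi> :: 'a::comm_ring_1 \<Rightarrow> 'b::comm_ring_1)" "q \<ge> 2"
  shows "Poly_Mapping.map \<phi> (gpoly q n :: 'a mpoly) = (gpoly q n :: 'b mpoly)"
proof (rule poly_mapping_eqI)
  fix m
  have h0: "\<phi> 0 = 0" and h1: "\<phi> 1 = 1" using assms(1) unfolding ring_hom_fun_def by auto
  show "Poly_Mapping.lookup (Poly_Mapping.map \<phi> (gpoly q n :: 'a mpoly)) m = Poly_Mapping.lookup (gpoly q n :: 'b mpoly) m"
    by (simp add: map.rep_eq lookup_g[OF assms(2)] when_def h0 h1 hom_neg1[OF assms(1)])
qed

theorem mainTheorem6:
  fixes q n :: nat and g :: "'k::{finite,field} mpoly"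
  assumes "odd n" and "card (UNIV :: 'k set) = q" and "g = gpoly q n"
  shows "g \<noteq> 0
    \<and> in_vars n g
    \<and> homogeneous (q + 1) g
    \<and> (\<forall>\<phi> :: 'k \<Rightarrow> 'L::field. ring_hom_fun \<phi> \<longrightarrow>
          smooth_hypersurface n (Poly_Mapping.map \<phi> g))
    \<and> (\<forall>x :: nat \<Rightarrow> 'k. meval g x = 0)
    \<and> (n \<ge> 3 \<longrightarrow> (\<forall>\<phi> :: 'k \<Rightarrow> 'L::field. ring_hom_fun \<phi> \<longrightarrow>
          irreducible_hypersurface (Poly_Mapping.map \<phi> g)))"
proof -
  have q: "q \<ge> 2" using card_ge2[where 'k='k] assms(2) by simp
  have qk: "of_nat q = (0::'k)" using finite_card_zero[where 'k='k] assms(2) by simp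
  have c1: "g \<noteq> 0" using g_ne0[OF q assms(1)] assms(3) by simp
  have c2: "in_vars n g" unfolding in_vars_def
  proof
    fix m assume m: "m \<in> Poly_Mapping.keys g"
    show "Poly_Mapping.keys m \<subseteq> {0..n}"
    proof
      fix k assume k: "k \<in> Poly_Mapping.keys m"
      have "\<not> k > n" using F5[OF q, of m n k] m k assms(3) by (auto simp: in_keys_iff)
      then show "k \<in> {0..n}" by simp
    qed
  qed
  have c3: "homogeneous (q + 1) g" unfolding homogeneous_def
  proof
    fix m assume m: "m \<in> Poly_Mapping.keys g"
    then obtain j where "m = Am q j \<or> m = Bm q j" using kG[OF q] assms(3) by blast
    then show "mon_deg m = q + 1" using q
      by (auto simp: mon_deg_def keys_Am keys_Bm lookup_Am lookup_Bm)
  qed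
  have c4: "\<forall>\<phi> :: 'k \<Rightarrow> 'L::field. ring_hom_fun \<phi> \<longrightarrow> smooth_hypersurface n (Poly_Mapping.map \<phi> g)"
  proof (intro allI impI)
    fix \<phi> :: "'k \<Rightarrow> 'L" assume h: "ring_hom_fun \<phi>"
    have "of_nat q = (0::'L)" using hom_of_nat[OF h, of q] qk h unfolding ring_hom_fun_def by simp
    then show "smooth_hypersurface n (Poly_Mapping.map \<phi> g)"
      using smooth_g[OF assms(1) q] map_g[OF h q] assms(3) by simp
  qed
  have c5: "\<forall>x :: nat \<Rightarrow> 'k. meval g x = 0"
  proof
    fix x :: "nat \<Rightarrow> 'k"
    have pw: "\<And>a::'k. a ^ q = a" using finite_field_pow assms(2) by metis
    show "meval g x = 0" using assms(3) by (simp add: meval_g[OF q] pw)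
  qed
  have c6: "n \<ge> 3 \<longrightarrow> (\<forall>\<phi> :: 'k \<Rightarrow> 'L::field. ring_hom_fun \<phi> \<longrightarrow>
          irreducible_hypersurface (Poly_Mapping.map \<phi> g))"
  proof (intro impI allI)
    fix \<phi> :: "'k \<Rightarrow> 'L" assume n3: "n \<ge> 3" and h: "ring_hom_fun \<phi>"
    have "irreducible (Poly_Mapping.map \<phi> g)"
      using g_irreducible[OF q n3 assms(1)] map_g[OF h q] assms(3) by simp
    then show "irreducible_hypersurface (Poly_Mapping.map \<phi> g)"
      unfolding irreducible_hypersurface_def by (intro exI[of _ "Poly_Mapping.map \<phi> g"] exI[of _ 1]) auto
  qed
  show ?thesis using c1 c2 c3 c4 c5 c6 by blast
qed


end
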